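(* Fix a branch-and-bound node $\mathcal{N}$ and let $\boldsymbol{\beta}^\star$ solve the node relaxation $\min_{\boldsymbol{\beta}\in\mathbb{R}^p} F(\boldsymbol{X}\boldsymbol{\beta})+2\lambda_2 g_{\mathcal{N}}(\boldsymbol{\beta})$. Let $\bar k=k-|\mathcal{J}_1(\mathcal{N})|$ and $p_f=|\mathcal{J}_f(\mathcal{N})|$. Set $z_j^\star=0$ for $j\in\mathcal{J}_0(\mathcal{N})$ and $z_j^\star=1$ for $j\in\mathcal{J}_1(\mathcal{N})$. On the free set $\mathcal{J}_f(\mathcal{N})$: if $\bar k=0$, set $z_j^\star=0$. If at most $\bar k$ free coefficients are nonzero, set $z_j^\star=1$ for nonzero $\beta_j^\star$ and $z_j^\star=0$ for zero $\beta_j^\star$. Otherwise, sort the free magnitudes as $|\beta_{\pi(1)}^\star|\ge\cdots\ge|\beta_{\pi(p_f)}^\star|$ and find an index $s\in\{0,\ldots,\bar k-1\}$ such that \[ \tau:=\frac{\sum_{r=s+1}^{p_f}|\beta_{\pi(r)}^\star|}{\bar k-s},\qquad |\beta_{\pi(s)}^\star|\ge \tau \ge |\beta_{\pi(s+1)}^\star|, \] with the convention $|\beta_{\pi(0)}^\star|=+\infty$; then set $z_{\pi(r)}^\star=1$ for $r\le s$ and $z_{\pi(r)}^\star=|\beta_{\pi(r)}^\star|/\tau$ for $r>s$, $r=1,\ldots,p_f$. The resulting vector $\boldsymbol{z}^\star$ is an optimal relaxed indicator vector paired with $\boldsymbol{\beta}^\star$, i.e., it attains the infimum defining $g_{\m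athcal{N}}(\boldsymbol{\beta}^\star)$.
   Context: Setting: cardinality-constrained generalized linear model $\min_{\boldsymbol{\beta}}\{f(\boldsymbol{X}\boldsymbol{\beta},\boldsymbol{y})+\lambda_2\|\boldsymbol{\beta}\|_2^2: \|\boldsymbol{\beta}\|_0\le k,\ \|\boldsymbol{\beta}\|_\infty\le M\}$ with $\boldsymbol{X}\in\mathbb{R}^{n\times p}$, convex differentiable loss $f$, $F(\boldsymbol{X}\boldsymbol{\beta}):=f(\boldsymbol{X}\boldsymbol{\beta},\boldsymbol{y})$, $\lambda_2>0$, $M>0$. A branch-and-bound node $\mathcal{N}$ partitions $[p]$ into $\mathcal{J}_0(\mathcal{N})$ (indicators fixed to 0), $\mathcal{J}_1(\mathcal{N})$ (fixed to 1), and the free set $\mathcal{J}_f(\mathcal{N})$. The perspective-relaxation function is $g_{\mathcal{N}}(\boldsymbol{\beta}):=\inf_{\boldsymbol{z}}\{\tfrac12\sum_{j=1}^p\beta_j^2/z_j:\ z_j\in[0,1]\ \forall j\in\mathcal{J}_f(\mathcal{N}),\ \mathbf{1}^\top\boldsymbol{z}\le k,\ |\beta_j|\le Mz_j,\ z_j=0\ \forall j\in\mathcal{J}_0(\mathcal{N}),\ z_j=1\ \forall j\in\mathcal{J}_1(\mathcal{N})\}$, with the convention $\beta_j^2/z_j=0$ when $(\beta_j,z_j)=(0,0)$ and $+\infty$ when $z_j=0$, $\beta_j\neq0$. *)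

theory Defs
  imports "HOL-Analysis.Analysis"
begin

definition persp :: "real \<Rightarrow> real \<Rightarrow> ereal" where
  "persp b z = (if z = 0 then (if b = 0 then 0 else \<infinity>) else ereal (b\<^sup>2 / z))"

definition node_feasible_z ::
  "'p::finite set \<Rightarrow> 'p set \<Rightarrow> 'p set \<Rightarrow> nat \<Rightarrow> real \<Rightarrow> real^'p \<Rightarrow> real^'p \<Rightarrow> bool" where
  "node_feasible_z J0 J1 Jf k M \<beta> z \<longleftrightarrow>
     (\<forall>j\<in>Jf. 0 \<le> z$j \<and> z$j \<le> 1) \<and>
     (\<Sum>j\<in>UNIV. z$j) \<le> real k \<and>
     (\<forall>j. \<bar>\<beta>$j\<bar> \<le> M * z$j) \<and>
     (\<forall>j\<in>J0. z$j = 0) \<and>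
     (\<forall>j\<in>J1. z$j = 1)"

definition persp_obj :: "real^'p::finite \<Rightarrow> real^'p \<Rightarrow> ereal" where
  "persp_obj \<beta> z = ereal (1/2) * (\<Sum>j\<in>UNIV. persp (\<beta>$j) (z$j))"

definition g_node ::
  "'p::finite set \<Rightarrow> 'p set \<Rightarrow> 'p set \<Rightarrow> nat \<Rightarrow> real \<Rightarrow> real^'p \<Rightarrow> ereal" where
  "g_node J0 J1 Jf k M \<beta> = (INF z \<in> {z. node_feasible_z J0 J1 Jf k M \<beta> z}. persp_obj \<beta> z)"

definition tau_split :: "real^'p::finite \<Rightarrow> (nat \<Rightarrow> 'p) \<Rightarrow> nat \<Rightarrow> nat \<Rightarrow> nat \<Rightarrow> real" where
  "tau_split \<beta> \<pi> pf kbar s = (\<Sum>r=s+1..pf. \<bar>\<beta>$(\<pi> r)\<bar>) / (real kbar - real s)"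

text \<open>Admissible split index s in {0,...,kbar-1}, with |beta_{pi(0)}| = +infinity.\<close>
definition split_ok :: "real^'p::finite \<Rightarrow> (nat \<Rightarrow> 'p) \<Rightarrow> nat \<Rightarrow> nat \<Rightarrow> nat \<Rightarrow> bool" where
  "split_ok \<beta> \<pi> pf kbar s \<longleftrightarrow>
     s < kbar \<and>
     (s = 0 \<or> \<bar>\<beta>$(\<pi> s)\<bar> \<ge> tau_split \<beta> \<pi> pf kbar s) \<and>
     tau_split \<beta> \<pi> pf kbar s \<ge> \<bar>\<beta>$(\<pi> (s+1))\<bar>"

text \<open>The constructed vector z*, for sorting map pi of {1..pf} onto Jf and split index s
  (s only matters in the third case).\<close>
definition zstar ::
  "'p::finite set \<Rightarrow> 'p set \<Rightarrow> 'p set \<Rightarrow> nat \<Rightarrow> real^'p \<Rightarrow> (nat \<Rightarrow> 'p) \<Rightarrow> nat \<Rightarrow> real^'p" where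
  "zstar J0 J1 Jf k \<beta> \<pi> s =
     (let kbar = k - card J1; pf = card Jf; nnz = card {j\<in>Jf. \<beta>$j \<noteq> 0} in
      \<chi> j. if j \<in> J0 then 0
            else if j \<in> J1 then 1
            else if kbar = 0 then 0
            else if nnz \<le> kbar then (if \<beta>$j \<noteq> 0 then 1 else 0)
            else (if inv_into {1..pf} \<pi> j \<le> s then 1
                  else \<bar>\<beta>$j\<bar> / tau_split \<beta> \<pi> pf kbar s))"

end

theory Submission
  imports Defs
begin

lemma key1:
  fixes b z t :: real
  assumes "0 \<le> z" "z \<le> 1" "\<bar>b\<bar> \<le> M * z" "M > 0" "t > 0" "\<bar>b\<bar> \<ge> t"
  shows "b\<^sup>2 / z + t\<^sup>2 * z \<ge> b\<^sup>2 + t\<^sup>2"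
proof -
  have zp: "z > 0"
  proof (rule ccontr)
    assume "\<not> z > 0"
    hence "z = 0" using assms(1) by simp
    thus False using assms by simp
  qed
  have "t\<^sup>2 \<le> \<bar>b\<bar>\<^sup>2" by (rule power_mono) (use assms in auto)
  hence bt: "b\<^sup>2 \<ge> t\<^sup>2" by simp
  have "b\<^sup>2 * z \<le> b\<^sup>2" by (rule mult_left_le) (use assms in auto)
  hence bz: "b\<^sup>2 / z \<ge> b\<^sup>2" using zp by (simp add: le_divide_eq)
  have "b\<^sup>2 / z + t\<^sup>2 * z - (b\<^sup>2 + t\<^sup>2) = (1 - z) * (b\<^sup>2 / z - t\<^sup>2)"
    using zp by (simp add: field_simps)
  also have "\<dots> \<ge> 0" using bz bt assms(2) by simp
  finally show ?thesis by simp
qed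

lemma key2:
  fixes b z t :: real
  assumes "0 \<le> z" "\<bar>b\<bar> \<le> M * z" "M > 0" "t \<ge> 0"
  shows "b\<^sup>2 / z + t\<^sup>2 * z \<ge> 2 * \<bar>b\<bar> * t"
proof (cases "z = 0")
  case True
  then show ?thesis using assms by simp
next
  case False
  hence zp: "z > 0" using assms by simp
  have "b\<^sup>2 / z + t\<^sup>2 * z - 2 * \<bar>b\<bar> * t = (\<bar>b\<bar> - t * z)\<^sup>2 / z"
    using zp by (simp add: field_simps power2_eq_square)
  also have "\<dots> \<ge> 0" using zp by simp
  finally show ?thesis by simp
qed

lemma key3:
  fixes b z :: real
  assumes "0 \<le> z" "z \<le> 1" "\<bar>b\<bar> \<le> M * z" "M > 0"
  shows "b\<^sup>2 / z \<ge> b\<^sup>2"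
proof (cases "z = 0")
  case True
  then show ?thesis using assms by simp
next
  case False
  hence zp: "z > 0" using assms by simp
  have "b\<^sup>2 * z \<le> b\<^sup>2" by (rule mult_left_le) (use assms in auto)
  thus ?thesis using zp by (simp add: le_divide_eq)
qed

lemma persp_feas:
  assumes "\<bar>b\<bar> \<le> M * z" "M > 0"
  shows "persp b z = ereal (b\<^sup>2 / z)"
  using assms by (auto simp: persp_def)


theorem theorem1:
  fixes X :: "real^'p::finite^'n::finite"
    and y :: "real^'n"
    and f :: "real^'n \<Rightarrow> real^'n \<Rightarrow> real"
    and lam2 M :: real
    and k :: nat
    and J0 J1 Jf :: "'p set"
    and \<beta>s :: "real^'p"
    and \<pi> :: "nat \<Rightarrow> 'p"
  assumes f_convex: "convex_on UNIV (\<lambda>u. f u y)"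
    and f_diff: "\<And>u. (\<lambda>u. f u y) differentiable (at u)"
    and lam_pos: "lam2 > 0"
    and M_pos: "M > 0"
    and partition: "J0 \<inter> J1 = {}" "J0 \<inter> Jf = {}" "J1 \<inter> Jf = {}" "J0 \<union> J1 \<union> Jf = UNIV"
    and node_valid: "card J1 \<le> k"
    and opt: "\<And>\<beta>. ereal (f (X *v \<beta>s) y) + ereal (2 * lam2) * g_node J0 J1 Jf k M \<beta>s
                  \<le> ereal (f (X *v \<beta>) y) + ereal (2 * lam2) * g_node J0 J1 Jf k M \<beta>"
    and pi_bij: "bij_betw \<pi> {1..card Jf} Jf"
    and pi_sorted: "\<And>r1 r2. 1 \<le> r1 \<Longrightarrow> r1 \<le> r2 \<Longrightarrow> r2 \<le> card Jf \<Longrightarrow>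
                       \<bar>\<beta>s$(\<pi> r2)\<bar> \<le> \<bar>\<beta>s$(\<pi> r1)\<bar>"
  shows "(k - card J1 \<noteq> 0 \<and> k - card J1 < card {j\<in>Jf. \<beta>s$j \<noteq> 0} \<longrightarrow>
            (\<exists>s. split_ok \<beta>s \<pi> (card Jf) (k - card J1) s))
       \<and> (\<forall>s. (k - card J1 \<noteq> 0 \<and> k - card J1 < card {j\<in>Jf. \<beta>s$j \<noteq> 0} \<longrightarrow>
                  split_ok \<beta>s \<pi> (card Jf) (k - card J1) s) \<longrightarrow>
              node_feasible_z J0 J1 Jf k M \<beta>s (zstar J0 J1 Jf k \<beta>s \<pi> s) \<and>
              persp_obj \<beta>s (zstar J0 J1 Jf k \<beta>s \<pi> s) = g_node J0 J1 Jf k M \<beta>s)"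
proof -
  define K where "K = k - card J1"
  define pf where "pf = card Jf"
  define nnz where "nnz = card {j\<in>Jf. \<beta>s$j \<noteq> 0}"
  define a where "a = (\<lambda>r. \<bar>\<beta>s$(\<pi> r)\<bar>)"
  define feas where "feas = node_feasible_z J0 J1 Jf k M \<beta>s"
  have Kr: "real K = real k - real (card J1)" using node_valid K_def by simp
  have sumU: "(\<Sum>j\<in>UNIV. w j) = (\<Sum>j\<in>J0. w j) + (\<Sum>j\<in>J1. w j) + (\<Sum>j\<in>Jf. w j)"
    for w :: "'p \<Rightarrow> real"
  proof -
    have "(\<Sum>j\<in>UNIV. w j) = (\<Sum>j\<in>J0 \<union> J1 \<union> Jf. w j)" using partition(4) by simp
    also have "\<dots> = (\<Sum>j\<in>J0 \<union> J1. w j) + (\<Sum>j\<in>Jf. w j)"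
      by (rule sum.union_disjoint) (use partition in auto)
    also have "(\<Sum>j\<in>J0 \<union> J1. w j) = (\<Sum>j\<in>J0. w j) + (\<Sum>j\<in>J1. w j)"
      by (rule sum.union_disjoint) (use partition in auto)
    finally show ?thesis .
  qed
  have sumJf_le: "(\<Sum>j\<in>Jf. z$j) \<le> real K" if "feas z" for z
  proof -
    have "(\<Sum>j\<in>J0. z$j) = 0" "(\<Sum>j\<in>J1. z$j) = real (card J1)"
      using that by (auto simp: feas_def node_feasible_z_def)
    moreover have "(\<Sum>j\<in>UNIV. z$j) \<le> real k" using that by (simp add: feas_def node_feasible_z_def)
    ultimately show ?thesis using sumU[of "\<lambda>j. z$j"] Kr by simp
  qed
  have pobj: "persp_obj \<beta>s z = ereal (1/2 * (\<Sum>j\<in>UNIV. (\<beta>s$j)\<^sup>2 / z$j))" if "feas z" for z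
  proof -
    have al: "\<forall>j. \<bar>\<beta>s$j\<bar> \<le> M * z$j"
      using that by (simp add: feas_def node_feasible_z_def)
    have "persp (\<beta>s$j) (z$j) = ereal ((\<beta>s$j)\<^sup>2 / z$j)" for j
      using al M_pos by (intro persp_feas[of _ M]) auto
    hence "(\<Sum>j\<in>UNIV. persp (\<beta>s$j) (z$j)) = ereal (\<Sum>j\<in>UNIV. (\<beta>s$j)\<^sup>2 / z$j)" by simp
    thus ?thesis unfolding persp_obj_def by simp
  qed
  have "\<exists>z0. feas z0"
  proof (rule ccontr)
    assume nf: "\<not> (\<exists>z0. feas z0)"
    hence ginf: "g_node J0 J1 Jf k M \<beta>s = \<infinity>" unfolding g_node_def feas_def by (simp add: top_ereal_def[symmetric])
    define z1 :: "real^'p" where "z1 = (\<chi> j. if j \<in> J1 then 1 else 0)"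
    have f1: "node_feasible_z J0 J1 Jf k M 0 z1"
      unfolding node_feasible_z_def z1_def using partition node_valid M_pos
      by (auto simp: sum.If_cases)
    have p0: "persp 0 w = 0" for w by (simp add: persp_def)
    have "persp_obj 0 z1 = 0" by (simp add: persp_obj_def p0)
    hence g0: "g_node J0 J1 Jf k M 0 \<le> 0" unfolding g_node_def
      by (metis (mono_tags, lifting) INF_lower f1 mem_Collect_eq)
    have m0: "ereal (2 * lam2) * g_node J0 J1 Jf k M 0 \<le> ereal (2 * lam2) * 0"
      by (rule ereal_mult_left_mono[OF g0]) (use lam_pos in simp)
    have R: "ereal (f (X *v 0) y) + ereal (2 * lam2) * g_node J0 J1 Jf k M 0 \<le> ereal (f (X *v 0) y)"
      using add_left_mono[OF m0, of "ereal (f (X *v 0) y)"] by simp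
    have L: "ereal (f (X *v \<beta>s) y) + ereal (2 * lam2) * g_node J0 J1 Jf k M \<beta>s = \<infinity>"
      using ginf lam_pos by simp
    have "\<infinity> \<le> ereal (f (X *v 0) y)" using opt[of 0] L R by (metis order_trans)
    thus False by simp
  qed
  then obtain z0 where z0: "feas z0" by blast
  have hJ0: "\<beta>s$j = 0" if "j \<in> J0" for j
  proof -
    have "\<forall>j. \<bar>\<beta>s$j\<bar> \<le> M * z0$j"
      using z0 by (simp add: feas_def node_feasible_z_def)
    hence "\<bar>\<beta>s$j\<bar> \<le> M * z0$j" by blast
    moreover have "z0$j = 0"
      using z0 that by (simp add: feas_def node_feasible_z_def)
    ultimately show ?thesis by simp
  qed
  have feasD: "(\<forall>j\<in>Jf. 0 \<le> z$j \<and> z$j \<le> 1) \<and> (\<Sum>j\<in>UNIV. z$j) \<le> real k \<and>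
      (\<forall>j. \<bar>\<beta>s$j\<bar> \<le> M * z$j) \<and> (\<forall>j\<in>J0. z$j = 0) \<and> (\<forall>j\<in>J1. z$j = 1)"
    if "feas z" for z using that by (simp add: feas_def node_feasible_z_def)
  have hM: "\<bar>\<beta>s$j\<bar> \<le> M" for j
  proof -
    have zb: "\<bar>\<beta>s$j\<bar> \<le> M * z0$j" using feasD[OF z0] by blast
    show ?thesis
    proof (cases "j \<in> J0")
      case True thus ?thesis using hJ0 M_pos by simp
    next
      case nJ0: False
      show ?thesis
      proof (cases "j \<in> J1")
        case True
        hence "z0$j = 1" using feasD[OF z0] by blast
        thus ?thesis using zb by simp
      next
        case False
        hence "j \<in> Jf" using partition(4) nJ0 by blast
        hence "z0$j \<le> 1" using feasD[OF z0] by blast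
        hence "M * z0$j \<le> M" using M_pos by (simp add: mult_left_le)
        thus ?thesis using zb by linarith
      qed
    qed
  qed
  have pib: "bij_betw \<pi> {1..pf} Jf" using pi_bij pf_def by simp
  have pi_in: "\<pi> r \<in> Jf" if "r \<in> {1..pf}" for r using bij_betw_apply[OF pib that] .
  have inv_in: "inv_into {1..pf} \<pi> j \<in> {1..pf}" if "j \<in> Jf" for j
    using pib that by (metis bij_betw_def inv_into_into)
  have pi_inv: "\<pi> (inv_into {1..pf} \<pi> j) = j" if "j \<in> Jf" for j
    using pib that by (meson bij_betw_inv_into_right)
  have inv_pi: "inv_into {1..pf} \<pi> (\<pi> r) = r" if "r \<in> {1..pf}" for r
    using pib that by (meson bij_betw_inv_into_left)
  have reidx: "(\<Sum>j\<in>Jf. w j) = (\<Sum>r=1..pf. w (\<pi> r))" for w :: "'p \<Rightarrow> real"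
    using sum.reindex_bij_betw[OF pib, of w] by simp
  have sorted: "a r2 \<le> a r1" if "1 \<le> r1" "r1 \<le> r2" "r2 \<le> pf" for r1 r2
    using pi_sorted that unfolding a_def pf_def by blast
  have nnz_eq: "{j\<in>Jf. \<beta>s$j \<noteq> 0} = \<pi> ` {r\<in>{1..pf}. a r \<noteq> 0}"
  proof
    show "{j\<in>Jf. \<beta>s$j \<noteq> 0} \<subseteq> \<pi> ` {r\<in>{1..pf}. a r \<noteq> 0}"
    proof
      fix j assume "j \<in> {j\<in>Jf. \<beta>s$j \<noteq> 0}"
      hence "j \<in> Jf" "\<beta>s$j \<noteq> 0" by auto
      thus "j \<in> \<pi> ` {r\<in>{1..pf}. a r \<noteq> 0}"
        using inv_in[of j] pi_inv[of j] unfolding a_def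
        by (intro image_eqI[of _ _ "inv_into {1..pf} \<pi> j"]) auto
    qed
    show "\<pi> ` {r\<in>{1..pf}. a r \<noteq> 0} \<subseteq> {j\<in>Jf. \<beta>s$j \<noteq> 0}"
      using pi_in unfolding a_def by auto
  qed
  have nnz_card: "nnz = card {r\<in>{1..pf}. a r \<noteq> 0}"
  proof -
    have "inj_on \<pi> {r\<in>{1..pf}. a r \<noteq> 0}"
      using pib by (rule inj_on_subset[OF bij_betw_imp_inj_on]) auto
    thus ?thesis unfolding nnz_def nnz_eq by (simp add: card_image)
  qed
  have nnz_le: "nnz \<le> pf"
  proof -
    have "{r\<in>{1..pf}. a r \<noteq> 0} \<subseteq> {1..pf}" by auto
    from card_mono[OF _ this] show ?thesis unfolding nnz_card by simp
  qed
  have apos: "a (s+1) > 0" if "s < nnz" for s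
  proof (rule ccontr)
    assume "\<not> a (s+1) > 0"
    hence a0: "a (s+1) = 0" unfolding a_def by simp
    have "{r\<in>{1..pf}. a r \<noteq> 0} \<subseteq> {1..s}"
    proof
      fix r assume r: "r \<in> {r\<in>{1..pf}. a r \<noteq> 0}"
      have "r \<le> s"
      proof (rule ccontr)
        assume "\<not> r \<le> s"
        hence "a r \<le> a (s+1)" using r by (intro sorted) auto
        moreover have "a r \<ge> 0" unfolding a_def by simp
        ultimately show False using a0 r by simp
      qed
      thus "r \<in> {1..s}" using r by auto
    qed
    hence "nnz \<le> s" unfolding nnz_card using card_mono[of "{1..s}"] by fastforce
    thus False using that by simp
  qed
  have anneg: "a r \<ge> 0" for r unfolding a_def by simp
  have tau_eq: "tau_split \<beta>s \<pi> pf K s = (\<Sum>r=s+1..pf. a r) / (real K - real s)" for s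
    unfolding tau_split_def a_def by simp
  have part1: "\<exists>s. split_ok \<beta>s \<pi> pf K s" if K0: "K \<noteq> 0" and Kn: "K < nnz"
  proof -
    define P where "P = (\<lambda>s. a (s+1) \<le> (\<Sum>r=s+1..pf. a r) / (real K - real s))"
    have KP: "K \<le> pf" using Kn nnz_le by simp
    have "P (K-1)"
    proof -
      have e: "K - 1 + 1 = K" using K0 by simp
      have r1: "real K - real (K - 1) = 1" using K0 by (simp add: of_nat_diff)
      have "a K \<le> (\<Sum>r=K..pf. a r)"
        by (rule member_le_sum) (use KP anneg in auto)
      thus ?thesis unfolding P_def e r1 by simp
    qed
    define s0 where "s0 = (LEAST s. P s)"
    have Ps0: "P s0" unfolding s0_def by (rule LeastI[of P, OF \<open>P (K-1)\<close>])
    have s0le: "s0 \<le> K - 1" unfolding s0_def by (rule Least_le[of P, OF \<open>P (K-1)\<close>])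
    hence s0K: "s0 < K" using K0 by simp
    have top: "s0 = 0 \<or> a s0 \<ge> (\<Sum>r=s0+1..pf. a r) / (real K - real s0)"
    proof (cases "s0 = 0")
      case False
      define t where "t = s0 - 1"
      have ts: "t + 1 = s0" "t < s0" using False t_def by auto
      have "\<not> P t" using not_less_Least[of t P] ts(2) s0_def by simp
      hence lt: "(\<Sum>r=t+1..pf. a r) / (real K - real t) < a s0" unfolding P_def ts(1) by simp
      have sp: "(\<Sum>r=t+1..pf. a r) = a s0 + (\<Sum>r=s0+1..pf. a r)"
        unfolding ts(1) using s0K KP by (simp add: sum.atLeast_Suc_atMost)
      have d: "real K - real t = (real K - real s0) + 1" using ts by linarith
      have dp: "real K - real s0 > 0" using s0K by simp
      have lt2: "(a s0 + (\<Sum>r=s0+1..pf. a r)) / ((real K - real s0) + 1) < a s0"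
        using lt unfolding sp d .
      have "a s0 + (\<Sum>r=s0+1..pf. a r) < a s0 * ((real K - real s0) + 1)"
        using lt2 dp by (simp add: pos_divide_less_eq)
      hence "(\<Sum>r=s0+1..pf. a r) < a s0 * (real K - real s0)" by (simp add: algebra_simps)
      hence "(\<Sum>r=s0+1..pf. a r) / (real K - real s0) < a s0" using dp by (simp add: pos_divide_less_eq)
      thus ?thesis by simp
    qed simp
    have "split_ok \<beta>s \<pi> pf K s0"
      unfolding split_ok_def tau_eq using s0K top Ps0 unfolding P_def a_def by auto
    thus ?thesis by blast
  qed
  have feasI: "feas w" if w0: "\<forall>j\<in>J0. w$j = 0" and w1: "\<forall>j\<in>J1. w$j = 1"
    and wf: "\<forall>j\<in>Jf. 0 \<le> w$j \<and> w$j \<le> 1" and ws: "(\<Sum>j\<in>Jf. w$j) \<le> real K"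
    and wm: "\<forall>j\<in>Jf. \<bar>\<beta>s$j\<bar> \<le> M * w$j" for w
  proof -
    have "(\<Sum>j\<in>J0. w$j) = 0" using w0 by simp
    moreover have "(\<Sum>j\<in>J1. w$j) = real (card J1)" using w1 by simp
    ultimately have su: "(\<Sum>j\<in>UNIV. w$j) \<le> real k" using sumU[of "\<lambda>j. w$j"] ws Kr by simp
    have am: "\<bar>\<beta>s$j\<bar> \<le> M * w$j" for j
    proof (cases "j \<in> J0")
      case True thus ?thesis using hJ0 w0 by simp
    next
      case nJ0: False
      show ?thesis
      proof (cases "j \<in> J1")
        case True thus ?thesis using hM w1 by simp
      next
        case False
        hence "j \<in> Jf" using partition(4) nJ0 by blast
        thus ?thesis using wm by blast
      qed
    qed
    show ?thesis unfolding feas_def node_feasible_z_def using wf su am w0 w1 by blast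
  qed
  have main: "node_feasible_z J0 J1 Jf k M \<beta>s (zstar J0 J1 Jf k \<beta>s \<pi> s) \<and>
              persp_obj \<beta>s (zstar J0 J1 Jf k \<beta>s \<pi> s) = g_node J0 J1 Jf k M \<beta>s"
    if H: "K \<noteq> 0 \<and> K < nnz \<longrightarrow> split_ok \<beta>s \<pi> pf K s" for s
  proof -
    define zs where "zs = zstar J0 J1 Jf k \<beta>s \<pi> s"
    define t where "t = tau_split \<beta>s \<pi> pf K s"
    have zJ0: "zs$j = 0" if "j \<in> J0" for j using that unfolding zs_def zstar_def Let_def by simp
    have zJ1: "zs$j = 1" if "j \<in> J1" for j
    proof -
      have "j \<notin> J0" using that partition(1) by blast
      thus ?thesis using that unfolding zs_def zstar_def Let_def by simp
    qed
    have zJf: "zs$j = (if K = 0 then 0 else if nnz \<le> K then (if \<beta>s$j \<noteq> 0 then 1 else 0)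
       else if inv_into {1..pf} \<pi> j \<le> s then 1 else \<bar>\<beta>s$j\<bar> / t)" if "j \<in> Jf" for j
    proof -
      have "j \<notin> J0" "j \<notin> J1" using that partition(2,3) by blast+
      thus ?thesis unfolding zs_def zstar_def Let_def K_def[symmetric] pf_def[symmetric]
          nnz_def[symmetric] t_def by simp
    qed
    have key: "feas zs \<and> (\<forall>z. feas z \<longrightarrow> (\<Sum>j\<in>Jf. (\<beta>s$j)\<^sup>2 / zs$j) \<le> (\<Sum>j\<in>Jf. (\<beta>s$j)\<^sup>2 / z$j))"
    proof (cases "K = 0")
      case K0: True
      have z00: "z0$j = 0" if "j \<in> Jf" for j
      proof -
        have nn: "\<forall>i\<in>Jf. 0 \<le> z0$i" using feasD[OF z0] by blast
        have "(\<Sum>j\<in>Jf. z0$j) = 0" using sumJf_le[OF z0] K0 sum_nonneg[of Jf "\<lambda>j. z0$j"] nn by simp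
        thus ?thesis using nn that sum_nonneg_eq_0_iff[of Jf "\<lambda>j. z0$j"] by simp
      qed
      have b0: "\<beta>s$j = 0" if "j \<in> Jf" for j
      proof -
        have "\<bar>\<beta>s$j\<bar> \<le> M * z0$j" using feasD[OF z0] by blast
        thus ?thesis using z00[OF that] by simp
      qed
      have zf: "zs$j = 0" if "j \<in> Jf" for j using zJf[OF that] K0 by simp
      have "feas zs" by (rule feasI) (use zJ0 zJ1 zf b0 in auto)
      moreover have "(\<Sum>j\<in>Jf. (\<beta>s$j)\<^sup>2 / zs$j) = 0" "(\<Sum>j\<in>Jf. (\<beta>s$j)\<^sup>2 / z$j) = 0" for z
        using b0 by simp_all
      ultimately show ?thesis by simp
    next
      case K0: False
      show ?thesis
      proof (cases "nnz \<le> K")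
        case True
        have zf: "zs$j = (if \<beta>s$j \<noteq> 0 then 1 else 0)" if "j \<in> Jf" for j using zJf[OF that] K0 True by simp
        have "(\<Sum>j\<in>Jf. zs$j) = (\<Sum>j\<in>Jf. if \<beta>s$j \<noteq> 0 then 1 else 0)" by (rule sum.cong) (use zf in auto)
        also have "\<dots> = (\<Sum>j\<in>{j\<in>Jf. \<beta>s$j \<noteq> 0}. 1)" by (rule sum.inter_filter[symmetric]) simp
        also have "\<dots> = real nnz" unfolding nnz_def by simp
        finally have "(\<Sum>j\<in>Jf. zs$j) \<le> real K" using True by simp
        hence "feas zs" by (intro feasI) (use zJ0 zJ1 zf hM in auto)
        moreover have "(\<Sum>j\<in>Jf. (\<beta>s$j)\<^sup>2 / zs$j) \<le> (\<Sum>j\<in>Jf. (\<beta>s$j)\<^sup>2 / z$j)" if fz: "feas z" for z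
        proof (rule sum_mono)
          fix j assume j: "j \<in> Jf"
          have "(\<beta>s$j)\<^sup>2 / zs$j = (\<beta>s$j)\<^sup>2" using zf[OF j] by simp
          also have "\<dots> \<le> (\<beta>s$j)\<^sup>2 / z$j"
            by (rule key3[of _ _ M]) (use feasD[OF fz] j M_pos in auto)
          finally show "(\<beta>s$j)\<^sup>2 / zs$j \<le> (\<beta>s$j)\<^sup>2 / z$j" .
        qed
        ultimately show ?thesis by blast
      next
        case False
        hence Kn: "K < nnz" by simp
        have sok: "split_ok \<beta>s \<pi> pf K s" using H K0 Kn by blast
        have sK: "s < K" and sup: "s = 0 \<or> t \<le> a s" and slo: "a (s+1) \<le> t"
          using sok unfolding split_ok_def t_def a_def by auto
        have spf: "s + 1 \<le> pf" using sK Kn nnz_le by simp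
        have tdef: "t = (\<Sum>r=s+1..pf. a r) / (real K - real s)" unfolding t_def tau_eq ..
        have tpos: "t > 0" using apos[of s] sK Kn slo by simp
        have Spos: "(\<Sum>r=s+1..pf. a r) > 0"
          using tpos tdef sK by (simp add: zero_less_divide_iff)
        have tM: "t \<le> M"
        proof (cases "s = 0")
          case True
          have "(\<Sum>r=1..pf. a r) = (\<Sum>j\<in>Jf. \<bar>\<beta>s$j\<bar>)" unfolding a_def reidx ..
          also have "\<dots> \<le> (\<Sum>j\<in>Jf. M * z0$j)" by (rule sum_mono) (use feasD[OF z0] in blast)
          also have "\<dots> = M * (\<Sum>j\<in>Jf. z0$j)" by (simp add: sum_distrib_left)
          also have "\<dots> \<le> M * real K" using sumJf_le[OF z0] M_pos by simp
          finally have "(\<Sum>r=1..pf. a r) \<le> M * real K" .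
          moreover have "real K > 0" using K0 by simp
          ultimately show ?thesis using tdef True by (simp add: pos_divide_le_eq)
        next
          case False
          thus ?thesis using sup hM[of "\<pi> s"] unfolding a_def by linarith
        qed
        have hi: "t \<le> \<bar>\<beta>s$j\<bar>" if "j \<in> Jf" "inv_into {1..pf} \<pi> j \<le> s" for j
        proof -
          define r where "r = inv_into {1..pf} \<pi> j"
          have r: "r \<in> {1..pf}" "\<pi> r = j" using inv_in[OF that(1)] pi_inv[OF that(1)] r_def by auto
          have "s \<noteq> 0" using r that(2) r_def by auto
          hence "t \<le> a s" using sup by simp
          also have "a s \<le> a r" by (rule sorted) (use r that(2) r_def spf in auto)
          finally show ?thesis using r unfolding a_def by simp
        qed
        have lo: "\<bar>\<beta>s$j\<bar> \<le> t" if "j \<in> Jf" "\<not> inv_into {1..pf} \<pi> j \<le> s" for j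
        proof -
          define r where "r = inv_into {1..pf} \<pi> j"
          have r: "r \<in> {1..pf}" "\<pi> r = j" using inv_in[OF that(1)] pi_inv[OF that(1)] r_def by auto
          have "a r \<le> a (s+1)" by (rule sorted) (use r that(2) r_def in auto)
          thus ?thesis using slo r unfolding a_def by simp
        qed
        have zf: "zs$j = (if inv_into {1..pf} \<pi> j \<le> s then 1 else \<bar>\<beta>s$j\<bar> / t)" if "j \<in> Jf" for j
          using zJf[OF that] K0 False by simp
        have sumzs: "(\<Sum>j\<in>Jf. zs$j) = real K"
        proof -
          have "(\<Sum>j\<in>Jf. zs$j) = (\<Sum>r=1..pf. zs$(\<pi> r))" by (rule reidx)
          also have "\<dots> = (\<Sum>r=1..pf. if r \<le> s then 1 else a r / t)"
            by (rule sum.cong) (use zf pi_in inv_pi a_def in auto)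
          also have "{1..pf} = {1..s} \<union> {s+1..pf}" using spf by auto
          also have "(\<Sum>r\<in>{1..s} \<union> {s+1..pf}. if r \<le> s then 1 else a r / t)
              = (\<Sum>r\<in>{1..s}. if r \<le> s then 1 else a r / t) + (\<Sum>r\<in>{s+1..pf}. if r \<le> s then 1 else a r / t)"
            by (rule sum.union_disjoint) auto
          also have "(\<Sum>r\<in>{1..s}. if r \<le> s then 1 else a r / t) = real s" by simp
          also have "(\<Sum>r\<in>{s+1..pf}. if r \<le> s then 1 else a r / t) = (\<Sum>r\<in>{s+1..pf}. a r / t)"
            by (rule sum.cong) auto
          also have "\<dots> = (\<Sum>r\<in>{s+1..pf}. a r) / t" by (simp add: sum_divide_distrib)
          also have "\<dots> = real K - real s" using tdef Spos sK tpos by (simp add: field_simps)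
          finally show ?thesis using sK by simp
        qed
        have zfb: "0 \<le> zs$j \<and> zs$j \<le> 1" if "j \<in> Jf" for j
          using zf[OF that] lo[OF that] tpos by auto
        have zfm: "\<bar>\<beta>s$j\<bar> \<le> M * zs$j" if "j \<in> Jf" for j
        proof (cases "inv_into {1..pf} \<pi> j \<le> s")
          case True thus ?thesis using zf[OF that] hM by simp
        next
          case False
          have "\<bar>\<beta>s$j\<bar> * t \<le> M * \<bar>\<beta>s$j\<bar>" using mult_right_mono[OF tM, of "\<bar>\<beta>s$j\<bar>"] by (simp add: mult.commute)
          hence "\<bar>\<beta>s$j\<bar> \<le> (M * \<bar>\<beta>s$j\<bar>) / t" using tpos by (simp add: pos_le_divide_eq)
          thus ?thesis using zf[OF that] False by simp
        qed
        have "feas zs" by (rule feasI) (use zJ0 zJ1 zfb sumzs zfm in auto)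
        moreover have "(\<Sum>j\<in>Jf. (\<beta>s$j)\<^sup>2 / zs$j) \<le> (\<Sum>j\<in>Jf. (\<beta>s$j)\<^sup>2 / z$j)" if fz: "feas z" for z
        proof -
          define L where "L = (\<lambda>j. if inv_into {1..pf} \<pi> j \<le> s then (\<beta>s$j)\<^sup>2 + t\<^sup>2 else 2 * \<bar>\<beta>s$j\<bar> * t)"
          have per: "L j \<le> (\<beta>s$j)\<^sup>2 / z$j + t\<^sup>2 * z$j" if j: "j \<in> Jf" for j
          proof (cases "inv_into {1..pf} \<pi> j \<le> s")
            case True
            thus ?thesis unfolding L_def using key1[of "z$j" "\<beta>s$j" M t] feasD[OF fz] j M_pos tpos hi[OF j] by auto
          next
            case False
            thus ?thesis unfolding L_def using key2[of "z$j" "\<beta>s$j" M t] feasD[OF fz] j M_pos tpos by auto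
          qed
          have eq: "(\<beta>s$j)\<^sup>2 / zs$j + t\<^sup>2 * zs$j = L j" if j: "j \<in> Jf" for j
          proof (cases "inv_into {1..pf} \<pi> j \<le> s")
            case True
            thus ?thesis unfolding L_def using zf[OF j] by simp
          next
            case False
            show ?thesis
            proof (cases "\<beta>s$j = 0")
              case True thus ?thesis unfolding L_def using zf[OF j] False by simp
            next
              case b: False
              have "(\<beta>s$j)\<^sup>2 = \<bar>\<beta>s$j\<bar>\<^sup>2" by simp
              moreover have "\<bar>\<beta>s$j\<bar>\<^sup>2 / (\<bar>\<beta>s$j\<bar> / t) + t\<^sup>2 * (\<bar>\<beta>s$j\<bar> / t) = 2 * \<bar>\<beta>s$j\<bar> * t"
                using b tpos by (simp add: field_simps power2_eq_square)
              ultimately show ?thesis unfolding L_def using zf[OF j] False by simp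
            qed
          qed
          have "(\<Sum>j\<in>Jf. L j) \<le> (\<Sum>j\<in>Jf. (\<beta>s$j)\<^sup>2 / z$j + t\<^sup>2 * z$j)" by (rule sum_mono) (use per in auto)
          also have "\<dots> = (\<Sum>j\<in>Jf. (\<beta>s$j)\<^sup>2 / z$j) + t\<^sup>2 * (\<Sum>j\<in>Jf. z$j)"
            by (simp add: sum.distrib sum_distrib_left)
          also have "\<dots> \<le> (\<Sum>j\<in>Jf. (\<beta>s$j)\<^sup>2 / z$j) + t\<^sup>2 * real K"
            using sumJf_le[OF fz] by (simp add: mult_left_mono)
          finally have A: "(\<Sum>j\<in>Jf. L j) \<le> (\<Sum>j\<in>Jf. (\<beta>s$j)\<^sup>2 / z$j) + t\<^sup>2 * real K" .
          have "(\<Sum>j\<in>Jf. L j) = (\<Sum>j\<in>Jf. (\<beta>s$j)\<^sup>2 / zs$j + t\<^sup>2 * zs$j)" by (rule sum.cong) (use eq in auto)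
          also have "\<dots> = (\<Sum>j\<in>Jf. (\<beta>s$j)\<^sup>2 / zs$j) + t\<^sup>2 * real K"
            using sumzs by (simp add: sum.distrib sum_distrib_left[symmetric])
          finally show ?thesis using A by simp
        qed
        ultimately show ?thesis by blast
      qed
    qed
    have fz: "feas zs" using key by blast
    have le: "persp_obj \<beta>s zs \<le> persp_obj \<beta>s z" if fz2: "feas z" for z
    proof -
      have e0: "(\<Sum>j\<in>J0. (\<beta>s$j)\<^sup>2 / zs$j) = (\<Sum>j\<in>J0. (\<beta>s$j)\<^sup>2 / z$j)"
        by (rule sum.cong) (use zJ0 feasD[OF fz2] in auto)
      have e1: "(\<Sum>j\<in>J1. (\<beta>s$j)\<^sup>2 / zs$j) = (\<Sum>j\<in>J1. (\<beta>s$j)\<^sup>2 / z$j)"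
        by (rule sum.cong) (use zJ1 feasD[OF fz2] in auto)
      have "(\<Sum>j\<in>UNIV. (\<beta>s$j)\<^sup>2 / zs$j) \<le> (\<Sum>j\<in>UNIV. (\<beta>s$j)\<^sup>2 / z$j)"
        using sumU[of "\<lambda>j. (\<beta>s$j)\<^sup>2 / zs$j"] sumU[of "\<lambda>j. (\<beta>s$j)\<^sup>2 / z$j"] e0 e1 key fz2 by simp
      thus ?thesis using pobj[OF fz] pobj[OF fz2] by simp
    qed
    have "persp_obj \<beta>s zs = g_node J0 J1 Jf k M \<beta>s" unfolding g_node_def
    proof (rule antisym)
      show "persp_obj \<beta>s zs \<le> (INF z\<in>{z. node_feasible_z J0 J1 Jf k M \<beta>s z}. persp_obj \<beta>s z)"
        by (rule INF_greatest) (use le feas_def in auto)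
      show "(INF z\<in>{z. node_feasible_z J0 J1 Jf k M \<beta>s z}. persp_obj \<beta>s z) \<le> persp_obj \<beta>s zs"
        by (rule INF_lower) (use fz feas_def in auto)
    qed
    thus ?thesis using fz unfolding zs_def feas_def by blast
  qed
  show ?thesis using part1 main unfolding K_def pf_def nnz_def by blast
qed

end
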